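(* Let $X\in L^2(\mathbb{R}^2)$ and suppose there is a nonzero $v\in L^2(\mathbb{R})$ with $\langle v,\mathcal{T}_Xv\rangle\ge0$. Then the problem $\min_{u\in L^2(\mathbb{R})}\frac12\|X-uu^*\|_{L^2(\mathbb{R}^2)}^2$ is equivalent to the problem $\max_{\|u\|_{L^2(\mathbb{R})}=1}\langle u,(\mathcal{T}_X+\mathcal{T}_X^* )u\rangle$; precisely, if $u$ is an optimal solution of the second problem, then $\big(\tfrac12\langle u,(\mathcal{T}_X+\mathcal{T}_X^* )u\rangle\big)uu^*$ is an optimal solution of the first problem (i.e., it equals $ww^*$ for a minimizer $w$ of the first problem).
   Context: For $X\in L^2(\mathbb{R}^2)$, $\mathcal{T}_X:L^2(\mathbb{R})\to L^2(\mathbb{R})$ is $\mathcal{T}_X[u](s)=\int_{\mathbb{R}}X(s,t)u(t)\,dt$, and $\mathcal{T}_X^*$ is its adjoint, $\mathcal{T}_X^*[u](t)=\int_{\mathbb{R}}X(s,t)u(s)\,ds$. For $u\in L^2(\mathbb{R})$, $uu^*$ is the function $(s,t)\mapsto u(s)u(t)$. *)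

theory Defs
  imports "HOL-Analysis.Analysis"
begin

text \<open>Real-valued L2 functions are represented by (Borel measurable, square integrable)
  functions; equality in L2 is almost-everywhere equality.\<close>

definition L2 :: "(real \<Rightarrow> real) \<Rightarrow> bool" where
  "L2 u \<longleftrightarrow> u \<in> borel_measurable lborel \<and> integrable lborel (\<lambda>x. (u x)^2)"

definition L2_2 :: "(real \<times> real \<Rightarrow> real) \<Rightarrow> bool" where
  "L2_2 X \<longleftrightarrow> X \<in> borel_measurable lborel \<and> integrable lborel (\<lambda>p. (X p)^2)"

definition inner_L2 :: "(real \<Rightarrow> real) \<Rightarrow> (real \<Rightarrow> real) \<Rightarrow> real" where
  "inner_L2 u v = (LINT x|lborel. u x * v x)"

definition norm_L2 :: "(real \<Rightarrow> real) \<Rightarrow> real" where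
  "norm_L2 u = sqrt (LINT x|lborel. (u x)^2)"

definition norm_L2_2 :: "(real \<times> real \<Rightarrow> real) \<Rightarrow> real" where
  "norm_L2_2 X = sqrt (LINT p|lborel. (X p)^2)"

definition T_op :: "(real \<times> real \<Rightarrow> real) \<Rightarrow> (real \<Rightarrow> real) \<Rightarrow> real \<Rightarrow> real" where
  "T_op X u s = (LINT t|lborel. X (s, t) * u t)"

definition T_adj :: "(real \<times> real \<Rightarrow> real) \<Rightarrow> (real \<Rightarrow> real) \<Rightarrow> real \<Rightarrow> real" where
  "T_adj X u t = (LINT s|lborel. X (s, t) * u s)"

definition outer :: "(real \<Rightarrow> real) \<Rightarrow> real \<times> real \<Rightarrow> real" where
  "outer u = (\<lambda>(s, t). u s * u t)"

definition obj1 :: "(real \<times> real \<Rightarrow> real) \<Rightarrow> (real \<Rightarrow> real) \<Rightarrow> real" where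
  "obj1 X u = (1/2) * (norm_L2_2 (\<lambda>p. X p - outer u p))^2"

definition obj2 :: "(real \<times> real \<Rightarrow> real) \<Rightarrow> (real \<Rightarrow> real) \<Rightarrow> real" where
  "obj2 X u = inner_L2 u (\<lambda>s. T_op X u s + T_adj X u s)"

definition is_min1 :: "(real \<times> real \<Rightarrow> real) \<Rightarrow> (real \<Rightarrow> real) \<Rightarrow> bool" where
  "is_min1 X w \<longleftrightarrow> L2 w \<and> (\<forall>w'. L2 w' \<longrightarrow> obj1 X w \<le> obj1 X w')"

definition is_max2 :: "(real \<times> real \<Rightarrow> real) \<Rightarrow> (real \<Rightarrow> real) \<Rightarrow> bool" where
  "is_max2 X u \<longleftrightarrow> L2 u \<and> norm_L2 u = 1 \<and>
     (\<forall>u'. L2 u' \<and> norm_L2 u' = 1 \<longrightarrow> obj2 X u' \<le> obj2 X u)"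

end

theory Submission
  imports Defs
begin

definition QQ :: "(real \<times> real \<Rightarrow> real) \<Rightarrow> (real \<Rightarrow> real) \<Rightarrow> real" where
  "QQ X u = (LINT p|(lborel \<Otimes>\<^sub>M lborel). X p * u (fst p) * u (snd p))"

lemma prod_int:
  fixes f g :: "real \<Rightarrow> real"
  assumes f: "integrable lborel f" and g: "integrable lborel g"
  shows "integrable (lborel \<Otimes>\<^sub>M lborel) (\<lambda>p. f (fst p) * g (snd p))"
proof (rule lborel_pair.Fubini_integrable)
  have [measurable]: "f \<in> borel_measurable lborel" "g \<in> borel_measurable lborel"
    using f g by auto
  show "(\<lambda>p. f (fst p) * g (snd p)) \<in> borel_measurable (lborel \<Otimes>\<^sub>M lborel)"
    by measurable
  have "(\<lambda>x. LINT y|lborel. norm (f (fst (x, y)) * g (snd (x, y)))) = (\<lambda>x. \<bar>f x\<bar> * (LINT y|lborel. \<bar>g y\<bar>))"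
    by (simp add: abs_mult)
  moreover have "integrable lborel (\<lambda>x. \<bar>f x\<bar> * (LINT y|lborel. \<bar>g y\<bar>))"
    using f by (intro integrable_mult_left integrable_abs)
  ultimately show "integrable lborel (\<lambda>x. LINT y|lborel. norm (f (fst (x, y)) * g (snd (x, y))))"
    by simp
  show "AE x in lborel. integrable lborel (\<lambda>y. f (fst (x, y)) * g (snd (x, y)))"
    using g by (auto intro!: integrable_mult_right)
qed

lemma L2_2_prod:
  assumes "L2_2 X"
  shows "X \<in> borel_measurable (lborel \<Otimes>\<^sub>M lborel)"
    "integrable (lborel \<Otimes>\<^sub>M lborel) (\<lambda>p. (X p)^2)"
  using assms unfolding L2_2_def lborel_prod by auto

lemma abs_mult_le_sq: "\<bar>a*b\<bar> \<le> a^2 + (b::real)^2"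
proof -
  have "0 \<le> (\<bar>a\<bar> - \<bar>b\<bar>)^2" by simp
  hence "2*(\<bar>a\<bar>*\<bar>b\<bar>) \<le> a^2 + b^2" by (simp add: power2_eq_square algebra_simps)
  moreover have "0 \<le> \<bar>a\<bar>*\<bar>b\<bar>" by simp
  ultimately have "\<bar>a\<bar>*\<bar>b\<bar> \<le> a^2+b^2" by linarith
  thus ?thesis by (simp add: abs_mult)
qed

lemma intXuu:
  assumes X: "L2_2 X" and u: "L2 u"
  shows "integrable (lborel \<Otimes>\<^sub>M lborel) (\<lambda>p. X p * u (fst p) * u (snd p))"
proof -
  have [measurable]: "X \<in> borel_measurable (lborel \<Otimes>\<^sub>M lborel)" "u \<in> borel_measurable lborel"
    using L2_2_prod[OF X] u unfolding L2_def by auto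
  have i1: "integrable (lborel \<Otimes>\<^sub>M lborel) (\<lambda>p. (X p)^2)" using L2_2_prod[OF X] by auto
  have i2: "integrable (lborel \<Otimes>\<^sub>M lborel) (\<lambda>p. (u (fst p))^2 * (u (snd p))^2)"
    using u unfolding L2_def by (intro prod_int) auto
  show ?thesis
  proof (rule Bochner_Integration.integrable_bound[OF Bochner_Integration.integrable_add[OF i1 i2]])
    show "(\<lambda>p. X p * u (fst p) * u (snd p)) \<in> borel_measurable (lborel \<Otimes>\<^sub>M lborel)"
      by measurable
    show "AE p in lborel \<Otimes>\<^sub>M lborel. norm (X p * u (fst p) * u (snd p)) \<le> norm ((X p)^2 + (u (fst p))^2 * (u (snd p))^2)"
    proof (intro AE_I2)
      fix p
      have "\<bar>X p * (u (fst p) * u (snd p))\<bar> \<le> (X p)^2 + (u (fst p) * u (snd p))^2"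
        by (rule abs_mult_le_sq)
      then show "norm (X p * u (fst p) * u (snd p)) \<le> norm ((X p)^2 + (u (fst p))^2 * (u (snd p))^2)"
        by (simp add: power_mult_distrib mult.assoc)
    qed
  qed
qed


lemma meas_basic:
  assumes X: "L2_2 X" and u: "L2 u"
  shows "X \<in> borel_measurable (lborel \<Otimes>\<^sub>M lborel)" "u \<in> borel_measurable lborel"
  using L2_2_prod[OF X] u unfolding L2_def by auto

lemma innerT:
  assumes X: "L2_2 X" and u: "L2 u"
  shows "inner_L2 u (T_op X u) = QQ X u"
    and "integrable lborel (\<lambda>s. u s * T_op X u s)"
proof -
  have I: "integrable (lborel \<Otimes>\<^sub>M lborel) (\<lambda>p. X p * u (fst p) * u (snd p))"
    by (rule intXuu[OF X u])
  have eq: "\<And>s. u s * T_op X u s = (LINT t|lborel. X (s,t) * u (fst (s,t)) * u (snd (s,t)))"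
    unfolding T_op_def by (simp add: ac_simps)
  show "inner_L2 u (T_op X u) = QQ X u"
    unfolding inner_L2_def QQ_def eq using lborel_pair.integral_fst'[OF I] by simp
  show "integrable lborel (\<lambda>s. u s * T_op X u s)"
    unfolding eq using lborel_pair.integrable_fst'[OF I] by simp
qed

lemma innerTadj:
  assumes X: "L2_2 X" and u: "L2 u"
  shows "inner_L2 u (T_adj X u) = QQ X u"
    and "integrable lborel (\<lambda>s. u s * T_adj X u s)"
proof -
  have I: "integrable (lborel \<Otimes>\<^sub>M lborel) (case_prod (\<lambda>s t. X (s,t) * u s * u t))"
    using intXuu[OF X u] by (simp add: case_prod_beta')
  have eq: "\<And>t. u t * T_adj X u t = (LINT s|lborel. X (s,t) * u s * u t)"
    unfolding T_adj_def by (simp add: ac_simps)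
  have "QQ X u = integral\<^sup>L (lborel \<Otimes>\<^sub>M lborel) (case_prod (\<lambda>s t. X (s,t) * u s * u t))"
    unfolding QQ_def by (simp add: case_prod_beta')
  then show "inner_L2 u (T_adj X u) = QQ X u"
    unfolding inner_L2_def eq using lborel_pair.integral_snd[OF I] by simp
  show "integrable lborel (\<lambda>s. u s * T_adj X u s)"
    unfolding eq using lborel_pair.integrable_snd[OF I] by simp
qed

lemma obj2_eq:
  assumes X: "L2_2 X" and u: "L2 u"
  shows "obj2 X u = 2 * QQ X u"
proof -
  have "obj2 X u = (LINT s|lborel. u s * T_op X u s + u s * T_adj X u s)"
    unfolding obj2_def inner_L2_def by (simp add: distrib_left)
  also have "\<dots> = inner_L2 u (T_op X u) + inner_L2 u (T_adj X u)"
    unfolding inner_L2_def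
    by (rule Bochner_Integration.integral_add[OF innerT(2)[OF X u] innerTadj(2)[OF X u]])
  finally show ?thesis using innerT(1)[OF X u] innerTadj(1)[OF X u] by simp
qed

lemma obj1_eq:
  assumes X: "L2_2 X" and u: "L2 u"
  shows "obj1 X u = (1/2) * (LINT p|lborel. (X p)^2) - QQ X u + (1/2) * (LINT x|lborel. (u x)^2)^2"
proof -
  have [measurable]: "X \<in> borel_measurable (lborel \<Otimes>\<^sub>M lborel)" "u \<in> borel_measurable lborel"
    using meas_basic[OF X u] by auto
  have i1: "integrable (lborel \<Otimes>\<^sub>M lborel) (\<lambda>p. (X p)^2)" using L2_2_prod[OF X] by auto
  have i2: "integrable (lborel \<Otimes>\<^sub>M lborel) (\<lambda>p. (u (fst p))^2 * (u (snd p))^2)"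
    using u unfolding L2_def by (intro prod_int) auto
  have i3: "integrable (lborel \<Otimes>\<^sub>M lborel) (\<lambda>p. 2 * (X p * u (fst p) * u (snd p)))"
    using intXuu[OF X u] by auto
  have ou: "\<And>p. outer u p = u (fst p) * u (snd p)" unfolding outer_def by (simp add: case_prod_beta)
  have sq: "\<And>p. (X p - outer u p)^2 = ((X p)^2 - 2 * (X p * u (fst p) * u (snd p))) + (u (fst p))^2 * (u (snd p))^2"
    unfolding ou by (simp add: power2_eq_square algebra_simps)
  have nn: "0 \<le> (LINT p|lborel. (X p - outer u p)^2)" by simp
  have "(norm_L2_2 (\<lambda>p. X p - outer u p))^2 = (LINT p|lborel. (X p - outer u p)^2)"
    unfolding norm_L2_2_def using nn by simp
  also have "\<dots> = (LINT p|(lborel \<Otimes>\<^sub>M lborel). (X p - outer u p)^2)"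
    by (simp add: lborel_prod)
  also have "\<dots> = (LINT p|(lborel \<Otimes>\<^sub>M lborel). (X p)^2) - 2 * QQ X u
      + (LINT p|(lborel \<Otimes>\<^sub>M lborel). (u (fst p))^2 * (u (snd p))^2)"
    unfolding sq QQ_def
    apply (subst Bochner_Integration.integral_add[OF Bochner_Integration.integrable_diff[OF i1 i3] i2])
    apply (subst Bochner_Integration.integral_diff[OF i1 i3])
    apply simp
    done
  also have "(LINT p|(lborel \<Otimes>\<^sub>M lborel). (u (fst p))^2 * (u (snd p))^2) = (LINT x|lborel. (u x)^2)^2"
  proof -
    have "(LINT p|(lborel \<Otimes>\<^sub>M lborel). (u (fst p))^2 * (u (snd p))^2)
       = (LINT s|lborel. LINT t|lborel. (u (fst (s,t)))^2 * (u (snd (s,t)))^2)"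
      using lborel_pair.integral_fst'[OF i2] by simp
    also have "\<dots> = (LINT s|lborel. (u s)^2 * (LINT t|lborel. (u t)^2))" by simp
    also have "\<dots> = (LINT x|lborel. (u x)^2)^2" by (simp add: power2_eq_square)
    finally show ?thesis .
  qed
  also have "(LINT p|(lborel \<Otimes>\<^sub>M lborel). (X p)^2) = (LINT p|lborel. (X p)^2)"
    by (simp add: lborel_prod)
  finally show ?thesis unfolding obj1_def by simp
qed


lemma L2_scale:
  assumes u: "L2 u"
  shows "L2 (\<lambda>x. c * u x)" "(LINT x|lborel. (c * u x)^2) = c^2 * (LINT x|lborel. (u x)^2)"
proof -
  have e: "\<And>x. (c * u x)^2 = c^2 * (u x)^2" by (simp add: power_mult_distrib)
  show "L2 (\<lambda>x. c * u x)" using u unfolding L2_def e by auto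
  show "(LINT x|lborel. (c * u x)^2) = c^2 * (LINT x|lborel. (u x)^2)" unfolding e by simp
qed

lemma QQ_scale: "QQ X (\<lambda>x. c * u x) = c^2 * QQ X u"
proof -
  have e: "\<And>p. X p * (c * u (fst p)) * (c * u (snd p)) = c^2 * (X p * u (fst p) * u (snd p))"
    by (simp add: power2_eq_square ac_simps)
  show ?thesis unfolding QQ_def e by simp
qed

lemma QQ_zero:
  assumes X: "L2_2 X" and w: "L2 w" and z: "(LINT x|lborel. (w x)^2) = 0"
  shows "QQ X w = 0"
proof -
  have [measurable]: "X \<in> borel_measurable (lborel \<Otimes>\<^sub>M lborel)" "w \<in> borel_measurable lborel"
    using meas_basic[OF X w] by auto
  have "AE x in lborel. (w x)^2 = 0"
    using integral_nonneg_eq_0_iff_AE[of lborel "\<lambda>x. (w x)^2"] w z unfolding L2_def by auto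
  then have ae: "AE x in lborel. w x = 0" by simp
  have T0: "T_op X w s = 0" for s
  proof -
    have "T_op X w s = (LINT t|lborel. 0)"
    proof -
      have m1: "(\<lambda>t. X (s,t) * w t) \<in> borel_measurable lborel" by measurable
      have "AE t in lborel. X (s,t) * w t = 0" using ae by auto
      then show ?thesis unfolding T_op_def
        using integral_cong_AE[OF m1 borel_measurable_const[of 0]] by auto
    qed
    then show ?thesis by simp
  qed
  show ?thesis using innerT(1)[OF X w] unfolding inner_L2_def T0 by simp
qed

lemma norm1: "norm_L2 u = 1 \<longleftrightarrow> (LINT x|lborel. (u x)^2) = 1"
  unfolding norm_L2_def by auto

theorem mainTheorem20:
  fixes X :: "real \<times> real \<Rightarrow> real" and v u :: "real \<Rightarrow> real"
  assumes "L2_2 X"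
    and "L2 v" and "\<not> (AE x in lborel. v x = 0)"
    and "inner_L2 v (T_op X v) \<ge> 0"
    and "is_max2 X u"
  shows "\<exists>w. is_min1 X w \<and>
    (AE p in lborel. ((1/2) * obj2 X u) * outer u p = outer w p)"
proof -
  note X = assms(1)
  have u: "L2 u" and u1: "(LINT x|lborel. (u x)^2) = 1"
    and umax: "\<And>u'. L2 u' \<Longrightarrow> (LINT x|lborel. (u' x)^2) = 1 \<Longrightarrow> obj2 X u' \<le> obj2 X u"
    using assms(5) unfolding is_max2_def norm1 by auto
  define a where "a = QQ X u"
  have ob2: "obj2 X u = 2 * a" unfolding a_def by (rule obj2_eq[OF X u])
  define n where "n = (LINT x|lborel. (v x)^2)"
  have n0: "n \<noteq> 0"
  proof
    assume "n = 0"
    then have "AE x in lborel. (v x)^2 = 0"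
      using integral_nonneg_eq_0_iff_AE[of lborel "\<lambda>x. (v x)^2"] assms(2) unfolding L2_def n_def by auto
    then have "AE x in lborel. v x = 0" by simp
    with assms(3) show False by simp
  qed
  have npos: "n > 0" using n0 unfolding n_def by (metis integral_nonneg_AE AE_I2 zero_le_power2 order_le_less)
  define v' where "v' = (\<lambda>x. (1 / sqrt n) * v x)"
  have v'L2: "L2 v'" unfolding v'_def by (rule L2_scale(1)[OF assms(2)])
  have v'1: "(LINT x|lborel. (v' x)^2) = 1"
    unfolding v'_def L2_scale(2)[OF assms(2)] using npos by (simp add: power_divide n_def[symmetric])
  have "QQ X v \<ge> 0" using assms(4) innerT(1)[OF X assms(2)] by simp
  then have "QQ X v' \<ge> 0" unfolding v'_def QQ_scale by simp
  moreover have "obj2 X v' \<le> obj2 X u" by (rule umax[OF v'L2 v'1])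
  ultimately have a0: "a \<ge> 0" using obj2_eq[OF X v'L2] ob2 by simp
  define w where "w = (\<lambda>x. sqrt a * u x)"
  have wL2: "L2 w" unfolding w_def by (rule L2_scale(1)[OF u])
  have outw: "outer w p = a * outer u p" for p
    unfolding w_def outer_def using a0 by (simp add: case_prod_beta algebra_simps)
  define S where "S = (LINT p|lborel. (X p)^2)"
  have objw: "obj1 X w = (1/2) * S - a^2 / 2"
  proof -
    have "(LINT x|lborel. (w x)^2) = a" unfolding w_def L2_scale(2)[OF u] u1 using a0 by simp
    moreover have "QQ X w = a^2" unfolding w_def QQ_scale a_def[symmetric] using a0 by (simp add: power2_eq_square)
    ultimately show ?thesis unfolding obj1_eq[OF X wL2] S_def by (simp add: power2_eq_square)
  qed
  have "is_min1 X w"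
    unfolding is_min1_def
  proof (intro conjI allI impI wL2)
    fix w' assume w': "L2 w'"
    define m where "m = (LINT x|lborel. (w' x)^2)"
    have m0: "m \<ge> 0" unfolding m_def by simp
    have ob1: "obj1 X w' = (1/2) * S - QQ X w' + (1/2) * m^2"
      unfolding obj1_eq[OF X w'] S_def m_def ..
    show "obj1 X w \<le> obj1 X w'"
    proof (cases "m = 0")
      case True
      then have "QQ X w' = 0" using QQ_zero[OF X w'] unfolding m_def by simp
      then show ?thesis unfolding objw ob1 using True by simp
    next
      case False
      then have mpos: "m > 0" using m0 by simp
      define u' where "u' = (\<lambda>x. (1 / sqrt m) * w' x)"
      have u'L2: "L2 u'" unfolding u'_def by (rule L2_scale(1)[OF w'])
      have u'1: "(LINT x|lborel. (u' x)^2) = 1"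
        unfolding u'_def L2_scale(2)[OF w'] using mpos by (simp add: power_divide m_def[symmetric])
      have "obj2 X u' \<le> obj2 X u" by (rule umax[OF u'L2 u'1])
      moreover have "QQ X u' = QQ X w' / m"
        unfolding u'_def QQ_scale using mpos by (simp add: power_divide)
      ultimately have "2 * (QQ X w' / m) \<le> 2 * a"
        using obj2_eq[OF X u'L2] ob2 by simp
      then have "QQ X w' / m \<le> a" by simp
      then have q: "QQ X w' \<le> a * m" using mpos by (simp add: divide_le_eq)
      have "0 \<le> (m - a)^2" by simp
      then have "a * m \<le> a^2/2 + m^2/2" by (simp add: power2_eq_square algebra_simps)
      then show ?thesis unfolding objw ob1 using q by simp
    qed
  qed
  moreover have "AE p in lborel. ((1/2) * obj2 X u) * outer u p = outer w p"
    unfolding ob2 outw by simp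
  ultimately show ?thesis by blast
qed

end
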